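(* Let $\ell,m\ge0$ be integers and fix signs $\delta_1,\dots,\delta_m\in\{-1,1\}$. For $\epsilon\in\mathbb{R}$ let $N^\epsilon=\{(u,v)\in\mathbb{H}^\ell\times\mathbb{T}^m\mid \sum_{i=1}^\ell u_i+\sum_{j=1}^m(\delta_j v_{2j-1}-v_{2j})\le\epsilon\}$. Then for every $\epsilon>0$ the set $N^\epsilon$ is homotopy-equivalent to $N^{-\epsilon}$ with an $m$-dimensional cell attached.
   Context: $\mathbb{H}=[0,\infty)$, $\mathbb{T}=\{(a,b)\in\mathbb{R}^2\mid ab=0,\ b\ge0\}$, and $v\in\mathbb{T}^m\subset\mathbb{R}^{2m}$ means $(v_{2j-1},v_{2j})\in\mathbb{T}$ for $j=1,\dots,m$. *)

theory Defs
  imports "HOL-Analysis.Analysis"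
begin

text \<open>Points of H^l x T^m are pairs (u,v) of real sequences, u supported on {1..l},
 v supported on {1..2m} (coordinates outside are zero), with the product topology
 (which on such finitely supported vectors is the Euclidean topology).\<close>

definition HT :: "nat \<Rightarrow> nat \<Rightarrow> ((nat \<Rightarrow> real) \<times> (nat \<Rightarrow> real)) set" where
  "HT l m = {(u, v). (\<forall>i. i \<notin> {1..l} \<longrightarrow> u i = 0) \<and> (\<forall>i\<in>{1..l}. u i \<ge> 0)
       \<and> (\<forall>i. i \<notin> {1..2*m} \<longrightarrow> v i = 0)
       \<and> (\<forall>j\<in>{1..m}. v (2*j-1) * v (2*j) = 0 \<and> v (2*j) \<ge> 0)}"

definition Neps :: "nat \<Rightarrow> nat \<Rightarrow> (nat \<Rightarrow> real) \<Rightarrow> real \<Rightarrow> ((nat \<Rightarrow> real) \<times> (nat \<Rightarrow> real)) set" where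
  "Neps l m \<delta> \<epsilon> = {(u, v) \<in> HT l m.
      (\<Sum>i=1..l. u i) + (\<Sum>j=1..m. \<delta> j * v (2*j-1) - v (2*j)) \<le> \<epsilon>}"

definition cdisc :: "nat \<Rightarrow> (nat \<Rightarrow> real) set" where
  "cdisc m = {x. (\<forall>i. i \<notin> {1..m} \<longrightarrow> x i = 0) \<and> (\<Sum>i=1..m. (x i)^2) \<le> 1}"

definition csphere :: "nat \<Rightarrow> (nat \<Rightarrow> real) set" where
  "csphere m = {x. (\<forall>i. i \<notin> {1..m} \<longrightarrow> x i = 0) \<and> (\<Sum>i=1..m. (x i)^2) = 1}"

text \<open>Z is obtained from X by attaching an m-cell along some attaching map g:
 Z is the pushout (adjunction space) X \<union>_g D^m, characterised by the inclusion i,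
 the characteristic map \<Phi>, and the coherent (quotient) topology.\<close>

definition cell_attached :: "'a topology \<Rightarrow> nat \<Rightarrow> 'b topology \<Rightarrow> bool" where
  "cell_attached X m Z \<longleftrightarrow>
    (\<exists>g i \<Phi>. continuous_map (top_of_set (csphere m)) X g
      \<and> continuous_map X Z i \<and> continuous_map (top_of_set (cdisc m)) Z \<Phi>
      \<and> (\<forall>x\<in>csphere m. \<Phi> x = i (g x))
      \<and> inj_on i (topspace X) \<and> inj_on \<Phi> (cdisc m - csphere m)
      \<and> i ` topspace X \<inter> \<Phi> ` (cdisc m - csphere m) = {}
      \<and> topspace Z = i ` topspace X \<union> \<Phi> ` cdisc m
      \<and> (\<forall>U. U \<subseteq> topspace Z \<longrightarrow>
            (openin Z U \<longleftrightarrow> openin X (topspace X \<inter> i -` U)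
                              \<and> openin (top_of_set (cdisc m)) (cdisc m \<inter> \<Phi> -` U))))"

end

theory Submission
  imports Defs
begin

lemma adj_quot:
  fixes \<Phi> :: "'a::topological_space \<Rightarrow> 'b::t2_space"
  assumes D: "compact D" and c: "continuous_on D \<Phi>" and A: "closed A"
    and Y: "Y = A \<union> \<Phi> ` D" and W: "W \<subseteq> Y"
    and oA: "openin (top_of_set A) (A \<inter> W)"
    and oD: "openin (top_of_set D) (D \<inter> \<Phi> -` W)"
  shows "openin (top_of_set Y) W"
proof -
  have c1: "closed (A - W)"
  proof -
    have "closedin (top_of_set A) (A - (A \<inter> W))" using closedin_diff[OF closedin_topspace oA] by simp
    moreover have "A - (A \<inter> W) = A - W" by blast
    ultimately have "closedin (top_of_set A) (A - W)" by simp
    then show ?thesis using A closedin_closed_trans by blast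
  qed
  have "closedin (top_of_set D) (D - (D \<inter> \<Phi> -` W))" using closedin_diff[OF closedin_topspace oD] by simp
  moreover have "D - (D \<inter> \<Phi> -` W) = D - \<Phi> -` W" by blast
  ultimately have "compact (D - \<Phi> -` W)" using D closedin_compact by metis
  then have "compact (\<Phi> ` (D - \<Phi> -` W))"
    using c by (meson Diff_subset compact_continuous_image continuous_on_subset)
  then have c2: "closed (\<Phi> ` (D - \<Phi> -` W))" by (rule compact_imp_closed)
  have eq: "Y - W = (A - W) \<union> \<Phi> ` (D - \<Phi> -` W)" using Y by auto
  have "closed (Y - W)" unfolding eq using c1 c2 by blast
  then have "closedin (top_of_set Y) (Y - W)" by (simp add: closed_subset)
  then show ?thesis using W by (simp add: openin_closedin_eq Diff_Diff_Int Int_absorb1)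
qed

lemma openin_Z:
  fixes Y :: "'b::topological_space set"
  shows "openin (pullback_topology (Inl ` Y) projl (top_of_set Y) :: ('b + 'c) topology) S
     \<longleftrightarrow> S \<subseteq> Inl ` Y \<and> openin (top_of_set Y) (Inl -` S)"
proof
  assume "openin (pullback_topology (Inl ` Y) projl (top_of_set Y) :: ('b + 'c) topology) S"
  then obtain U where U: "openin (top_of_set Y) U" "S = projl -` U \<inter> Inl ` Y"
    by (auto simp: openin_pullback_topology)
  have "U \<subseteq> Y" using U(1) openin_imp_subset by blast
  moreover have "Inl -` S = U \<inter> Y" using U(2) by auto
  ultimately show "S \<subseteq> Inl ` Y \<and> openin (top_of_set Y) (Inl -` S)"
    using U by (simp add: Int_absorb2)
next
  assume a: "S \<subseteq> Inl ` Y \<and> openin (top_of_set Y) (Inl -` S)"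
  have "S = projl -` (Inl -` S) \<inter> Inl ` Y" using a by auto
  then show "openin (pullback_topology (Inl ` Y) projl (top_of_set Y) :: ('b + 'c) topology) S"
    using a by (auto simp: openin_pullback_topology)
qed

lemma topspace_Z:
  fixes Y :: "'b::topological_space set"
  shows "topspace (pullback_topology (Inl ` Y) projl (top_of_set Y) :: ('b + 'c) topology) = Inl ` Y"
  by (auto simp: topspace_pullback_topology)

lemma Z_homeo:
  fixes Y :: "'b::topological_space set"
  shows "(pullback_topology (Inl ` Y) projl (top_of_set Y) :: ('b + 'c) topology) homeomorphic_space top_of_set Y"
proof -
  let ?Z = "pullback_topology (Inl ` Y) projl (top_of_set Y) :: ('b + 'c) topology"
  have c1: "continuous_map ?Z (top_of_set Y) projl"
    using continuous_map_pullback[OF continuous_map_id, of "Inl ` Y" projl "top_of_set Y"] by simp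
  have c2: "continuous_map (top_of_set Y) ?Z Inl"
    by (rule continuous_map_pullback') (auto simp: o_def)
  show ?thesis unfolding homeomorphic_space_def homeomorphic_maps_def
    by (rule exI[of _ projl], rule exI[of _ Inl]) (use c1 c2 in \<open>auto simp: topspace_Z\<close>)
qed

lemma cell_model:
  fixes \<Phi> :: "(nat \<Rightarrow> real) \<Rightarrow> 'b::t2_space"
  assumes D: "compact (cdisc m)" and c: "continuous_on (cdisc m) \<Phi>" and A: "closed A"
    and Y: "Y = A \<union> \<Phi> ` cdisc m" and sph: "\<Phi> ` csphere m \<subseteq> A"
    and inj: "inj_on \<Phi> (cdisc m - csphere m)" and disj: "A \<inter> \<Phi> ` (cdisc m - csphere m) = {}"
    and sub: "csphere m \<subseteq> cdisc m"
  shows "cell_attached (top_of_set A) m (pullback_topology (Inl ` Y) projl (top_of_set Y) :: ('b + 'c) topology)"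
proof -
  let ?Z = "pullback_topology (Inl ` Y) projl (top_of_set Y) :: ('b + 'c) topology"
  have AY: "A \<subseteq> Y" using Y by auto
  have DY: "\<Phi> ` cdisc m \<subseteq> Y" using Y by auto
  have g: "continuous_map (top_of_set (csphere m)) (top_of_set A) \<Phi>"
    using continuous_on_subset[OF c sub] sph by auto
  have i: "continuous_map (top_of_set A) ?Z Inl"
    by (rule continuous_map_pullback') (use AY in \<open>auto simp: o_def\<close>)
  have ph: "continuous_map (top_of_set (cdisc m)) ?Z (Inl \<circ> \<Phi>)"
    by (rule continuous_map_pullback') (use DY c in \<open>auto simp: o_def\<close>)
  have quot: "openin ?Z U \<longleftrightarrow> openin (top_of_set A) (topspace (top_of_set A) \<inter> Inl -` U)
                              \<and> openin (top_of_set (cdisc m)) (cdisc m \<inter> (Inl \<circ> \<Phi>) -` U)"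
    if U: "U \<subseteq> topspace ?Z" for U
  proof -
    define W where "W = Inl -` U"
    have WY: "W \<subseteq> Y" using U by (auto simp: topspace_Z W_def)
    have "openin ?Z U \<longleftrightarrow> openin (top_of_set Y) W"
      using U by (simp add: openin_Z topspace_Z W_def)
    also have "\<dots> \<longleftrightarrow> openin (top_of_set A) (A \<inter> W) \<and> openin (top_of_set (cdisc m)) (cdisc m \<inter> \<Phi> -` W)"
    proof
      assume o: "openin (top_of_set Y) W"
      then obtain T where T: "open T" "W = Y \<inter> T" by (auto simp: openin_open)
      have "A \<inter> W = A \<inter> T" using T AY by auto
      then have "openin (top_of_set A) (A \<inter> W)" using T by (auto simp: openin_open)
      moreover have "openin (top_of_set (cdisc m)) (cdisc m \<inter> \<Phi> -` W)"
        by (rule continuous_openin_preimage[OF c _ o]) (use DY in blast)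
      ultimately show "openin (top_of_set A) (A \<inter> W) \<and> openin (top_of_set (cdisc m)) (cdisc m \<inter> \<Phi> -` W)" by simp
    next
      assume "openin (top_of_set A) (A \<inter> W) \<and> openin (top_of_set (cdisc m)) (cdisc m \<inter> \<Phi> -` W)"
      then show "openin (top_of_set Y) W" using adj_quot[OF D c A Y WY] by blast
    qed
    finally show ?thesis by (simp add: W_def vimage_comp)
  qed
  show ?thesis unfolding cell_attached_def
    apply (rule exI[of _ \<Phi>], rule exI[of _ Inl], rule exI[of _ "Inl \<circ> \<Phi>"])
    using g i ph quot inj disj by (auto simp: topspace_Z Y inj_on_def)
qed

lemma heq_contractible:
  assumes "contractible_space X" "contractible_space Y" "a \<in> topspace X" "b \<in> topspace Y"
  shows "X homotopy_equivalent_space Y"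
  unfolding homotopy_equivalent_space_def
  apply (rule exI[of _ "\<lambda>x. b"], rule exI[of _ "\<lambda>x. a"])
  using assms by (auto intro!: homotopic_into_contractible_space)

lemma hom_canon:
  assumes "continuous_on ({0..1::real} \<times> S) h" "h ` ({0..1} \<times> S) \<subseteq> T"
    "\<And>x. h (0, x) = p x" "\<And>x. h (1, x) = q x"
  shows "homotopic_with_canon (\<lambda>x. True) S T p q"
  unfolding homotopic_with_def
  by (rule exI[of _ h]) (use assms in auto)

lemma cont_coord:
  "continuous_on S f \<Longrightarrow> continuous_on S (\<lambda>x. f x i :: 'b::topological_space)"
  by (rule continuous_on_product_then_coordinatewise)

lemma cont_c0 [continuous_intros]: "continuous_on S (\<lambda>x. x i :: 'b::topological_space)"
  by (rule cont_coord) (rule continuous_on_id)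
lemma cont_c1 [continuous_intros]: "continuous_on S (\<lambda>x. fst x i :: 'b::topological_space)"
  by (rule cont_coord) (intro continuous_intros)
lemma cont_c2 [continuous_intros]: "continuous_on S (\<lambda>x. snd x i :: 'b::topological_space)"
  by (rule cont_coord) (intro continuous_intros)
lemma cont_c3 [continuous_intros]: "continuous_on S (\<lambda>x. fst (snd x) i :: 'b::topological_space)"
  by (rule cont_coord) (intro continuous_intros)
lemma cont_c4 [continuous_intros]: "continuous_on S (\<lambda>x. snd (snd x) i :: 'b::topological_space)"
  by (rule cont_coord) (intro continuous_intros)

definition FF :: "nat \<Rightarrow> nat \<Rightarrow> (nat \<Rightarrow> real) \<Rightarrow> (nat \<Rightarrow> real) \<times> (nat \<Rightarrow> real) \<Rightarrow> real" where
  "FF l m \<delta> p = (\<Sum>i=1..l. fst p i) + (\<Sum>j=1..m. \<delta> j * snd p (2*j-1) - snd p (2*j))"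

lemma Neps_eq: "Neps l m \<delta> e = {p \<in> HT l m. FF l m \<delta> p \<le> e}"
  by (auto simp: Neps_def FF_def)

lemma HT_iff: "(u, v) \<in> HT l m \<longleftrightarrow> (\<forall>i. i \<notin> {1..l} \<longrightarrow> u i = 0) \<and> (\<forall>i\<in>{1..l}. u i \<ge> 0)
       \<and> (\<forall>i. i \<notin> {1..2*m} \<longrightarrow> v i = 0)
       \<and> (\<forall>j\<in>{1..m}. v (2*j-1) * v (2*j) = 0 \<and> v (2*j) \<ge> 0)"
  by (simp add: HT_def)

lemma closed_HT: "closed (HT l m)"
proof -
  have "HT l m = (\<Inter>i\<in>-{1..l}. {p. fst p i = 0}) \<inter> (\<Inter>i\<in>{1..l}. {p. fst p i \<ge> 0})
     \<inter> (\<Inter>i\<in>-{1..2*m}. {p. snd p i = 0})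
     \<inter> (\<Inter>j\<in>{1..m}. {p. snd p (2*j-1) * snd p (2*j) = 0} \<inter> {p. snd p (2*j) \<ge> 0})"
    by (auto simp: HT_def)
  moreover have "closed \<dots>"
    by (intro closed_Int closed_INT ballI closed_Collect_eq closed_Collect_le continuous_intros)
  ultimately show ?thesis by simp
qed

lemma cont_FF: "continuous_on S (FF l m \<delta>)"
  unfolding FF_def by (intro continuous_intros)

lemma closed_Neps: "closed (Neps l m \<delta> e)"
proof -
  have "Neps l m \<delta> e = HT l m \<inter> {p. FF l m \<delta> p \<le> e}" by (auto simp: Neps_eq)
  moreover have "closed {p. FF l m \<delta> p \<le> e}"
    by (intro closed_Collect_le cont_FF continuous_intros)
  ultimately show ?thesis using closed_HT by auto
qed

lemma csphere_sub: "csphere m \<subseteq> cdisc m"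
  by (auto simp: csphere_def cdisc_def)

lemma zero_cdisc: "(\<lambda>_. 0) \<in> cdisc m"
  by (auto simp: cdisc_def)

lemma closed_cdisc: "closed (cdisc m)"
proof -
  have "cdisc m = (\<Inter>i\<in>-{1..m}. {x. x i = 0}) \<inter> {x. (\<Sum>i=1..m. (x i)^2) \<le> 1}"
    by (auto simp: cdisc_def)
  moreover have "closed \<dots>"
    by (intro closed_Int closed_INT ballI closed_Collect_eq closed_Collect_le continuous_intros)
  ultimately show ?thesis by simp
qed

lemma compact_cdisc: "compact (cdisc m)"
proof -
  define S where "S = (\<lambda>i::nat. if i \<in> {1..m} then {-1..1::real} else {0})"
  have "compactin (product_topology (\<lambda>i. euclidean) UNIV) (PiE UNIV S)"
    unfolding compactin_PiE by (auto simp: S_def)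
  then have c: "compact (PiE UNIV S)" by (simp add: euclidean_product_topology)
  have "cdisc m \<subseteq> PiE UNIV S"
  proof
    fix x assume x: "x \<in> cdisc m"
    have "x i \<in> S i" for i
    proof (cases "i \<in> {1..m}")
      case True
      have "(x i)^2 \<le> (\<Sum>i=1..m. (x i)^2)"
        by (rule member_le_sum) (use True in auto)
      then have "(x i)^2 \<le> 1" using x by (auto simp: cdisc_def)
      then have "\<bar>x i\<bar> \<le> 1" by (simp add: abs_square_le_1)
      then show ?thesis using True by (auto simp: S_def)
    next
      case False then show ?thesis using x by (auto simp: S_def cdisc_def)
    qed
    then show "x \<in> PiE UNIV S" by auto
  qed
  then have "cdisc m = PiE UNIV S \<inter> cdisc m" by blast
  then show ?thesis using compact_Int_closed[OF c closed_cdisc] by metis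
qed

definition sq :: "real \<Rightarrow> real \<Rightarrow> real" where "sq e t = e * t * \<bar>t\<bar>"

lemma sq_mono: fixes a b :: real assumes "a < b" shows "a * \<bar>a\<bar> < b * \<bar>b\<bar>"
proof (cases "a \<ge> 0")
  case True
  then have "a * a < b * b" using \<open>a < b\<close> by (intro mult_strict_mono) auto
  then show ?thesis using True \<open>a < b\<close> by simp
next
  case False
  show ?thesis
  proof (cases "b \<ge> 0")
    case True
    have "a * \<bar>a\<bar> < 0" using mult_neg_neg[of a a] False by (simp add: abs_if)
    moreover have "0 \<le> b * \<bar>b\<bar>" using True by simp
    ultimately show ?thesis by linarith
  next
    case False2: False
    have "(-b) * (-b) < (-a) * (-a)" using \<open>a < b\<close> False2 by (intro mult_strict_mono) auto
    then show ?thesis using False False2 by simp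
  qed
qed

lemma sq_inj: "e > 0 \<Longrightarrow> sq e a = sq e b \<Longrightarrow> a = b"
proof (rule ccontr)
  assume e: "e > 0" and eq: "sq e a = sq e b" and ne: "a \<noteq> b"
  have eq2: "a * \<bar>a\<bar> = b * \<bar>b\<bar>" using eq e by (simp add: sq_def mult.assoc)
  show False
  proof (cases "a < b")
    case True then show False using sq_mono[OF True] eq2 by simp
  next
    case False then have "b < a" using ne by simp
    then show False using sq_mono eq2 by fastforce
  qed
qed

definition PhiV :: "nat \<Rightarrow> (nat \<Rightarrow> real) \<Rightarrow> real \<Rightarrow> (nat \<Rightarrow> real) \<Rightarrow> nat \<Rightarrow> real" where
  "PhiV m \<delta> e x k = (if k \<in> {1..2*m} then (if even k then max (sq e (x (k div 2))) 0
      else \<delta> ((k+1) div 2) * min (sq e (x ((k+1) div 2))) 0) else 0)"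

definition Phi :: "nat \<Rightarrow> (nat \<Rightarrow> real) \<Rightarrow> real \<Rightarrow> (nat \<Rightarrow> real) \<Rightarrow> (nat \<Rightarrow> real) \<times> (nat \<Rightarrow> real)" where
  "Phi m \<delta> e x = ((\<lambda>_. 0), PhiV m \<delta> e x)"

lemma PhiV_odd: "j \<in> {1..m} \<Longrightarrow> PhiV m \<delta> e x (2*j-1) = \<delta> j * min (sq e (x j)) 0"
  unfolding PhiV_def by auto

lemma PhiV_even: "j \<in> {1..m} \<Longrightarrow> PhiV m \<delta> e x (2*j) = max (sq e (x j)) 0"
  unfolding PhiV_def by auto

lemma PhiV_out: "k \<notin> {1..2*m} \<Longrightarrow> PhiV m \<delta> e x k = 0"
  unfolding PhiV_def by auto

lemma Phi_HT: "Phi m \<delta> e x \<in> HT l m"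
proof -
  have "PhiV m \<delta> e x (2*j-1) * PhiV m \<delta> e x (2*j) = 0 \<and> PhiV m \<delta> e x (2*j) \<ge> 0" if "j \<in> {1..m}" for j
    using PhiV_odd[OF that] PhiV_even[OF that] by (simp add: min_def max_def)
  then show ?thesis unfolding Phi_def HT_iff by (simp add: PhiV_out)
qed

lemma FF_Phi:
  assumes d: "\<forall>j\<in>{1..m}. \<delta> j = -1 \<or> \<delta> j = 1" and e: "e > 0"
  shows "FF l m \<delta> (Phi m \<delta> e x) = - e * (\<Sum>j=1..m. (x j)^2)"
proof -
  have "\<delta> j * snd (Phi m \<delta> e x) (2*j-1) - snd (Phi m \<delta> e x) (2*j) = - e * (x j)^2" if j: "j \<in> {1..m}" for j
  proof -
    have dd: "\<delta> j * \<delta> j = 1" using bspec[OF d j] by auto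
    have "\<delta> j * snd (Phi m \<delta> e x) (2*j-1) - snd (Phi m \<delta> e x) (2*j)
        = (\<delta> j * \<delta> j) * min (sq e (x j)) 0 - max (sq e (x j)) 0"
      unfolding Phi_def snd_conv PhiV_odd[OF j] PhiV_even[OF j] by (simp add: algebra_simps)
    also have "\<dots> = - \<bar>sq e (x j)\<bar>" using dd by (simp add: min_def max_def)
    also have "\<dots> = - e * (x j)^2" using e by (simp add: sq_def abs_mult power2_eq_square)
    finally show ?thesis .
  qed
  then have "FF l m \<delta> (Phi m \<delta> e x) = (\<Sum>j=1..m. - e * (x j)^2)"
    unfolding FF_def by (simp add: Phi_def)
  then show ?thesis by (simp add: sum_distrib_left)
qed

lemma Phi_inj:
  assumes d: "\<forall>j\<in>{1..m}. \<delta> j = -1 \<or> \<delta> j = 1" and e: "e > 0"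
  shows "inj_on (Phi m \<delta> e) (cdisc m)"
proof
  fix x y assume x: "x \<in> cdisc m" and y: "y \<in> cdisc m" and eq: "Phi m \<delta> e x = Phi m \<delta> e y"
  then have eqv: "PhiV m \<delta> e x = PhiV m \<delta> e y" by (simp add: Phi_def)
  have rec: "sq e (z j) = PhiV m \<delta> e z (2*j) + \<delta> j * PhiV m \<delta> e z (2*j-1)" if j: "j \<in> {1..m}" for z j
  proof -
    have dd: "\<delta> j * \<delta> j = 1" using bspec[OF d j] by auto
    have "PhiV m \<delta> e z (2*j) + \<delta> j * PhiV m \<delta> e z (2*j-1) = max (sq e (z j)) 0 + (\<delta> j * \<delta> j) * min (sq e (z j)) 0"
      unfolding PhiV_odd[OF j] PhiV_even[OF j] by (simp add: algebra_simps)
    then show ?thesis using dd by (simp add: min_def max_def)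
  qed
  show "x = y"
  proof
    fix j show "x j = y j"
    proof (cases "j \<in> {1..m}")
      case True
      then have "sq e (x j) = sq e (y j)" using rec[of j x] rec[of j y] eqv by simp
      then show ?thesis using sq_inj e by blast
    next
      case False then show ?thesis using x y by (auto simp: cdisc_def)
    qed
  qed
qed

lemma cont_PhiV: "continuous_on S (\<lambda>x. PhiV m \<delta> e x k)"
proof (cases "k \<in> {1..2*m}")
  case True
  show ?thesis
  proof (cases "even k")
    case True2: True
    have "continuous_on S (\<lambda>x. max (e * x (k div 2) * \<bar>x (k div 2)\<bar>) 0)"
      by (intro continuous_intros continuous_on_id)
    then show ?thesis using True True2 unfolding PhiV_def sq_def by simp
  next
    case False2: False
    have "continuous_on S (\<lambda>x. \<delta> ((k+1) div 2) * min (e * x ((k+1) div 2) * \<bar>x ((k+1) div 2)\<bar>) 0)"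
      by (intro continuous_intros continuous_on_id)
    then show ?thesis using True False2 unfolding PhiV_def sq_def by simp
  qed
next
  case False
  then have "(\<lambda>x. PhiV m \<delta> e x k) = (\<lambda>x. 0)" unfolding PhiV_def by auto
  then show ?thesis by (metis continuous_on_const)
qed

lemma cont_Phi: "continuous_on S (Phi m \<delta> e)"
  unfolding Phi_def by (intro continuous_intros continuous_on_coordinatewise_then_product cont_PhiV)

lemma HT_scale:
  assumes "(u, v) \<in> HT l m" "c \<ge> 0"
  shows "((\<lambda>i. c * u i), (\<lambda>k. c * v k)) \<in> HT l m"
proof -
  have "c * v (2*j-1) * (c * v (2*j)) = 0" if "j \<in> {1..m}" for j
  proof -
    have "v (2*j-1) * v (2*j) = 0" using assms(1) that by (simp add: HT_iff)
    then have "c * c * (v (2*j-1) * v (2*j)) = 0" by simp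
    then show ?thesis by (simp add: algebra_simps)
  qed
  then show ?thesis using assms by (simp add: HT_iff)
qed

lemma FF_scale: "FF l m \<delta> ((\<lambda>i. c * u i), (\<lambda>k. c * v k)) = c * FF l m \<delta> (u, v)"
  unfolding FF_def by (simp add: sum_distrib_left algebra_simps sum.distrib sum_subtractf)

lemma contractible_Neps_pos:
  assumes e: "e > 0"
  shows "contractible (Neps l m \<delta> e)"
proof -
  define h where "h = (\<lambda>z::real \<times> ((nat \<Rightarrow> real) \<times> (nat \<Rightarrow> real)).
     ((\<lambda>i. (1 - fst z) * fst (snd z) i), (\<lambda>k. (1 - fst z) * snd (snd z) k)))"
  have "homotopic_with_canon (\<lambda>x. True) (Neps l m \<delta> e) (Neps l m \<delta> e) id (\<lambda>x. ((\<lambda>_. 0), (\<lambda>_. 0)))"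
  proof (rule hom_canon[where h=h])
    show "continuous_on ({0..1} \<times> Neps l m \<delta> e) h"
      unfolding h_def by (intro continuous_intros continuous_on_coordinatewise_then_product)
    show "h ` ({0..1} \<times> Neps l m \<delta> e) \<subseteq> Neps l m \<delta> e"
    proof (rule image_subsetI)
      fix z assume z: "z \<in> {0..1::real} \<times> Neps l m \<delta> e"
      obtain t u v where zz: "z = (t, u, v)" by (metis prod_cases3)
      have t: "t \<in> {0..1::real}" and p: "(u, v) \<in> Neps l m \<delta> e" using z zz by auto
      have ht: "(u, v) \<in> HT l m" and f: "FF l m \<delta> (u, v) \<le> e" using p by (auto simp: Neps_eq)
      have "h (t, u, v) \<in> HT l m" unfolding h_def using HT_scale[OF ht, of "1-t"] t by simp
      moreover have "FF l m \<delta> (h (t, u, v)) \<le> e"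
      proof -
        have "FF l m \<delta> (h (t, u, v)) = (1 - t) * FF l m \<delta> (u, v)" unfolding h_def using FF_scale by simp
        also have "\<dots> \<le> e"
        proof (cases "FF l m \<delta> (u, v) \<le> 0")
          case True
          have "(1 - t) * FF l m \<delta> (u, v) \<le> 0" using True t by (intro mult_nonneg_nonpos) auto
          then show ?thesis using e by linarith
        next
          case False
          have "(1 - t) * FF l m \<delta> (u, v) \<le> 1 * FF l m \<delta> (u, v)"
            using t False by (intro mult_right_mono) auto
          then show ?thesis using f by simp
        qed
        finally show ?thesis .
      qed
      ultimately show "h z \<in> Neps l m \<delta> e" by (simp add: Neps_eq zz)
    qed
  qed (auto simp: h_def)
  then show ?thesis unfolding contractible_def by blast
qed

definition modv :: "nat \<Rightarrow> (nat \<Rightarrow> real) \<Rightarrow> real \<Rightarrow> (nat \<Rightarrow> real) \<Rightarrow> nat \<Rightarrow> real" where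
  "modv m \<delta> t v k = (if k \<in> {1..2*m} \<and> odd k
      then v k - t * \<delta> ((k+1) div 2) * max 0 (\<delta> ((k+1) div 2) * v k) else v k)"

lemma modv_odd: "j \<in> {1..m} \<Longrightarrow> modv m \<delta> t v (2*j-1) = v (2*j-1) - t * \<delta> j * max 0 (\<delta> j * v (2*j-1))"
  unfolding modv_def by auto

lemma modv_even: "j \<in> {1..m} \<Longrightarrow> modv m \<delta> t v (2*j) = v (2*j)"
  unfolding modv_def by auto

lemma modv_out: "k \<notin> {1..2*m} \<Longrightarrow> modv m \<delta> t v k = v k"
  unfolding modv_def by auto

lemma modv_zero: "modv m \<delta> 0 v = v"
  unfolding modv_def by auto

lemma idx_cases:
  fixes k m :: nat
  assumes "k \<in> {1..2*m}"
  obtains j where "j \<in> {1..m}" "k = 2*j" | j where "j \<in> {1..m}" "k = 2*j-1"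
proof (cases "even k")
  case True
  then obtain j where "k = 2*j" by (auto elim: evenE)
  then show ?thesis using that(1)[of j] assms by auto
next
  case False
  then obtain j where "k = 2*j+1" by (auto elim: oddE)
  then show ?thesis using that(2)[of "j+1"] assms by auto
qed

lemma modv_desc:
  assumes "\<forall>j\<in>{1..m}. \<delta> j * v (2*j-1) \<le> 0"
  shows "modv m \<delta> t v = v"
proof
  fix k show "modv m \<delta> t v k = v k"
  proof (cases "k \<in> {1..2*m}")
    case True
    then show ?thesis
    proof (cases rule: idx_cases)
      case (1 j) then show ?thesis using modv_even by simp
    next
      case (2 j) then show ?thesis using modv_odd[OF 2(1)] bspec[OF assms 2(1)] by simp
    qed
  next
    case False then show ?thesis by (simp add: modv_out)
  qed
qed

lemma cont_modv:
  assumes "continuous_on S f" "continuous_on S g"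
  shows "continuous_on S (\<lambda>z. modv m \<delta> (f z) (g z))"
proof (rule continuous_on_coordinatewise_then_product)
  fix k show "continuous_on S (\<lambda>z. modv m \<delta> (f z) (g z) k)"
    unfolding modv_def by (cases "k \<in> {1..2*m} \<and> odd k") (auto intro!: continuous_intros assms cont_coord[OF assms(2)])
qed

lemma sq_root:
  assumes e: "e > 0"
  shows "sq e (sgn s * sqrt (\<bar>s\<bar> / e)) = s"
proof -
  define R where "R = sqrt (\<bar>s\<bar> / e)"
  have R0: "R \<ge> 0" using e by (simp add: R_def)
  have r: "R * R = \<bar>s\<bar> / e" using e by (simp add: R_def)
  have "sq e (sgn s * R) = (sgn s * \<bar>sgn s\<bar>) * (e * (R * R))"
    unfolding sq_def using R0 by (simp add: abs_mult algebra_simps)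
  also have "\<dots> = (sgn s * \<bar>sgn s\<bar>) * \<bar>s\<bar>" using r e by simp
  also have "\<dots> = s" by (simp add: sgn_if)
  finally show ?thesis by (simp add: R_def)
qed

lemma sq_root2:
  assumes e: "e > 0"
  shows "(sgn s * sqrt (\<bar>s\<bar> / e))^2 = \<bar>s\<bar> / e"
proof -
  have "(sgn s * sqrt (\<bar>s\<bar> / e))^2 = (sgn s)^2 * (sqrt (\<bar>s\<bar> / e))^2" by (simp add: power_mult_distrib)
  also have "\<dots> = (sgn s)^2 * (\<bar>s\<bar> / e)" using e by simp
  also have "\<dots> = \<bar>s\<bar> / e" by (cases "s = 0") (auto simp: sgn_if)
  finally show ?thesis .
qed

lemma desc_mem:
  assumes d: "\<forall>j\<in>{1..m}. \<delta> j = -1 \<or> \<delta> j = 1" and e: "e > 0"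
    and ht: "((\<lambda>_. 0), w) \<in> HT l m" and ds: "\<forall>j\<in>{1..m}. \<delta> j * w (2*j-1) \<le> 0"
  shows "((\<lambda>_. 0), w) \<in> Neps l m \<delta> (-e) \<union> Phi m \<delta> e ` cdisc m"
proof (cases "FF l m \<delta> ((\<lambda>_. 0), w) \<le> -e")
  case True then show ?thesis using ht by (simp add: Neps_eq)
next
  case False
  define s where "s j = w (2*j) + \<delta> j * w (2*j-1)" for j
  define x where "x k = (if k \<in> {1..m} then sgn (s k) * sqrt (\<bar>s k\<bar> / e) else 0)" for k
  have facts: "max (s j) 0 = w (2*j) \<and> \<delta> j * min (s j) 0 = w (2*j-1) \<and> \<bar>s j\<bar> = w (2*j) - \<delta> j * w (2*j-1)"
    if j: "j \<in> {1..m}" for j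
  proof -
    have dd: "\<delta> j * \<delta> j = 1" using bspec[OF d j] by auto
    have ab: "w (2*j-1) * w (2*j) = 0" and b: "w (2*j) \<ge> 0" using ht j by (auto simp: HT_iff)
    have da: "\<delta> j * w (2*j-1) \<le> 0" using ds j by auto
    show ?thesis
    proof (cases "w (2*j) = 0")
      case True
      then have sj: "s j = \<delta> j * w (2*j-1)" by (simp add: s_def)
      have "\<delta> j * (\<delta> j * w (2*j-1)) = w (2*j-1)" using dd by (simp add: mult.assoc[symmetric])
      then show ?thesis using sj da True by (simp add: min_def max_def)
    next
      case False
      then have a0: "w (2*j-1) = 0" using ab by simp
      then have sj: "s j = w (2*j)" by (simp add: s_def)
      then show ?thesis using b a0 by (simp add: min_def max_def)
    qed
  qed
  have sqx: "sq e (x j) = s j" if "j \<in> {1..m}" for j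
    using that sq_root[OF e] by (simp add: x_def)
  have phi: "Phi m \<delta> e x = ((\<lambda>_. 0), w)"
    unfolding Phi_def
  proof (simp, rule ext)
    fix k show "PhiV m \<delta> e x k = w k"
    proof (cases "k \<in> {1..2*m}")
      case True
      then show ?thesis
      proof (cases rule: idx_cases)
        case (1 j) then show ?thesis using PhiV_even[OF 1(1)] sqx[OF 1(1)] facts[OF 1(1)] by simp
      next
        case (2 j) then show ?thesis using PhiV_odd[OF 2(1)] sqx[OF 2(1)] facts[OF 2(1)] by simp
      qed
    next
      case False then show ?thesis using ht by (simp add: PhiV_out HT_iff)
    qed
  qed
  have "(\<Sum>j=1..m. (x j)^2) = (\<Sum>j=1..m. \<bar>s j\<bar> / e)"
    by (rule sum.cong) (auto simp: x_def sq_root2[OF e])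
  also have "\<dots> = (\<Sum>j=1..m. w (2*j) - \<delta> j * w (2*j-1)) / e"
    by (simp add: sum_divide_distrib facts)
  also have "(\<Sum>j=1..m. w (2*j) - \<delta> j * w (2*j-1)) = - FF l m \<delta> ((\<lambda>_. 0), w)"
    unfolding FF_def by (simp add: sum_negf[symmetric])
  finally have "(\<Sum>j=1..m. (x j)^2) = - FF l m \<delta> ((\<lambda>_. 0), w) / e" .
  also have "\<dots> < 1"
  proof -
    have "- FF l m \<delta> ((\<lambda>_. 0), w) < 1 * e" using False by simp
    then show ?thesis by (simp only: pos_divide_less_eq[OF e])
  qed
  finally have "x \<in> cdisc m" by (auto simp: cdisc_def x_def)
  then show ?thesis using phi by (metis UnI2 image_eqI)
qed

lemma HT_H1:
  assumes ht: "(u, v) \<in> HT l m" and t: "0 \<le> t" "t \<le> 1"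
  shows "((\<lambda>i. (1 - t) * u i), modv m \<delta> t v) \<in> HT l m"
proof -
  have "modv m \<delta> t v (2*j-1) * modv m \<delta> t v (2*j) = 0 \<and> modv m \<delta> t v (2*j) \<ge> 0" if j: "j \<in> {1..m}" for j
  proof -
    have ab: "v (2*j-1) * v (2*j) = 0" and b: "v (2*j) \<ge> 0" using ht j by (auto simp: HT_iff)
    show ?thesis
    proof (cases "v (2*j) = 0")
      case True then show ?thesis unfolding modv_even[OF j] by simp
    next
      case False then have "v (2*j-1) = 0" using ab by simp
      then show ?thesis unfolding modv_even[OF j] modv_odd[OF j] using b by simp
    qed
  qed
  then show ?thesis using ht t by (simp add: HT_iff modv_out)
qed

lemma FF_H1:
  assumes d: "\<forall>j\<in>{1..m}. \<delta> j = -1 \<or> \<delta> j = 1"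
    and ht: "(u, v) \<in> HT l m" and t: "0 \<le> t" "t \<le> 1"
  shows "FF l m \<delta> ((\<lambda>i. (1 - t) * u i), modv m \<delta> t v) \<le> FF l m \<delta> (u, v)"
proof -
  have s0: "0 \<le> (\<Sum>i=1..l. u i)" using ht by (intro sum_nonneg) (auto simp: HT_iff)
  have "(\<Sum>i=1..l. (1 - t) * u i) = (1 - t) * (\<Sum>i=1..l. u i)" by (simp add: sum_distrib_left)
  also have "\<dots> \<le> 1 * (\<Sum>i=1..l. u i)" using s0 t by (intro mult_right_mono) auto
  finally have 1: "(\<Sum>i=1..l. (1 - t) * u i) \<le> (\<Sum>i=1..l. u i)" by simp
  have 2: "(\<Sum>j=1..m. \<delta> j * modv m \<delta> t v (2*j-1) - modv m \<delta> t v (2*j))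
        \<le> (\<Sum>j=1..m. \<delta> j * v (2*j-1) - v (2*j))"
  proof (rule sum_mono)
    fix j assume j: "j \<in> {1..m}"
    have dd: "\<delta> j * \<delta> j = 1" using bspec[OF d j] by auto
    have "\<delta> j * modv m \<delta> t v (2*j-1) = \<delta> j * v (2*j-1) - t * (\<delta> j * \<delta> j) * max 0 (\<delta> j * v (2*j-1))"
      unfolding modv_odd[OF j] by (simp add: algebra_simps)
    also have "\<dots> \<le> \<delta> j * v (2*j-1)" using dd t by simp
    finally show "\<delta> j * modv m \<delta> t v (2*j-1) - modv m \<delta> t v (2*j) \<le> \<delta> j * v (2*j-1) - v (2*j)"
      unfolding modv_even[OF j] by simp
  qed
  show ?thesis unfolding FF_def using 1 2 by simp
qed

definition YY :: "nat \<Rightarrow> nat \<Rightarrow> (nat \<Rightarrow> real) \<Rightarrow> real \<Rightarrow> ((nat \<Rightarrow> real) \<times> (nat \<Rightarrow> real)) set" where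
  "YY l m \<delta> e = Neps l m \<delta> (-e) \<union> Phi m \<delta> e ` cdisc m"

lemma YY_HT: "YY l m \<delta> e \<subseteq> HT l m"
  unfolding YY_def using Phi_HT by (auto simp: Neps_eq)

lemma Phi_desc:
  assumes d: "\<forall>j\<in>{1..m}. \<delta> j = -1 \<or> \<delta> j = 1"
  shows "\<forall>j\<in>{1..m}. \<delta> j * PhiV m \<delta> e x (2*j-1) \<le> 0"
proof
  fix j assume j: "j \<in> {1..m}"
  have dd: "\<delta> j * \<delta> j = 1" using bspec[OF d j] by auto
  have "\<delta> j * PhiV m \<delta> e x (2*j-1) = (\<delta> j * \<delta> j) * min (sq e (x j)) 0"
    unfolding PhiV_odd[OF j] by (simp add: algebra_simps)
  then show "\<delta> j * PhiV m \<delta> e x (2*j-1) \<le> 0" using dd by simp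
qed

lemma contractible_YY:
  assumes d: "\<forall>j\<in>{1..m}. \<delta> j = -1 \<or> \<delta> j = 1" and e: "e > 0"
  shows "contractible (YY l m \<delta> e)"
proof -
  define q where "q = (\<lambda>p::(nat \<Rightarrow> real) \<times> (nat \<Rightarrow> real). ((\<lambda>_::nat. 0::real), modv m \<delta> 1 (snd p)))"
  define h1 where "h1 = (\<lambda>z::real \<times> ((nat \<Rightarrow> real) \<times> (nat \<Rightarrow> real)).
     ((\<lambda>i. (1 - fst z) * fst (snd z) i), modv m \<delta> (fst z) (snd (snd z))))"
  define h2 where "h2 = (\<lambda>z::real \<times> ((nat \<Rightarrow> real) \<times> (nat \<Rightarrow> real)).
     ((\<lambda>_::nat. 0::real), (\<lambda>k. (1 - fst z) * modv m \<delta> 1 (snd (snd z)) k)))"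
  have H1: "homotopic_with_canon (\<lambda>x. True) (YY l m \<delta> e) (YY l m \<delta> e) id q"
  proof (rule hom_canon[where h=h1])
    show "continuous_on ({0..1} \<times> YY l m \<delta> e) h1"
      unfolding h1_def
      by (intro continuous_intros continuous_on_coordinatewise_then_product cont_modv)
    show "h1 ` ({0..1} \<times> YY l m \<delta> e) \<subseteq> YY l m \<delta> e"
    proof (rule image_subsetI)
      fix z assume z: "z \<in> {0..1::real} \<times> YY l m \<delta> e"
      obtain t u v where zz: "z = (t, u, v)" by (metis prod_cases3)
      have t: "0 \<le> t" "t \<le> 1" and p: "(u, v) \<in> YY l m \<delta> e" using z zz by auto
      show "h1 z \<in> YY l m \<delta> e"
      proof (cases "(u, v) \<in> Neps l m \<delta> (-e)")
        case True
        then have ht: "(u, v) \<in> HT l m" and f: "FF l m \<delta> (u, v) \<le> -e" by (auto simp: Neps_eq)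
        have "h1 z \<in> Neps l m \<delta> (-e)"
          using HT_H1[OF ht t, of \<delta>] FF_H1[OF d ht t] f by (simp add: Neps_eq h1_def zz)
        then show ?thesis by (simp add: YY_def)
      next
        case False
        then obtain x where x: "x \<in> cdisc m" "(u, v) = Phi m \<delta> e x" using p by (auto simp: YY_def)
        then have uv: "u = (\<lambda>_. 0)" "v = PhiV m \<delta> e x" by (auto simp: Phi_def)
        have "h1 z = Phi m \<delta> e x"
          using modv_desc[OF Phi_desc[OF d]] by (simp add: h1_def zz uv Phi_def)
        then show ?thesis using x by (simp add: YY_def)
      qed
    qed
    show "h1 (0, x) = id x" for x by (simp add: h1_def modv_zero)
    show "h1 (1, x) = q x" for x by (simp add: h1_def q_def)
  qed
  have H2: "homotopic_with_canon (\<lambda>x. True) (YY l m \<delta> e) (YY l m \<delta> e) q (\<lambda>x. ((\<lambda>_. 0), (\<lambda>_. 0)))"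
  proof (rule hom_canon[where h=h2])
    show "continuous_on ({0..1} \<times> YY l m \<delta> e) h2"
      unfolding h2_def
      by (intro continuous_intros continuous_on_coordinatewise_then_product cont_coord[OF cont_modv])
    show "h2 ` ({0..1} \<times> YY l m \<delta> e) \<subseteq> YY l m \<delta> e"
    proof (rule image_subsetI)
      fix z assume z: "z \<in> {0..1::real} \<times> YY l m \<delta> e"
      obtain t u v where zz: "z = (t, u, v)" by (metis prod_cases3)
      have t: "0 \<le> t" "t \<le> 1" and p: "(u, v) \<in> YY l m \<delta> e" using z zz by auto
      have ht: "(u, v) \<in> HT l m" using p YY_HT by blast
      have "((\<lambda>i. (1 - 1) * u i), modv m \<delta> 1 v) \<in> HT l m" by (rule HT_H1[OF ht]) auto
      then have "((\<lambda>_. 0), modv m \<delta> 1 v) \<in> HT l m" by simp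
      from HT_scale[OF this, of "1 - t"] t
      have ht2: "((\<lambda>_. 0), (\<lambda>k. (1 - t) * modv m \<delta> 1 v k)) \<in> HT l m" by simp
      have ds: "\<forall>j\<in>{1..m}. \<delta> j * ((1 - t) * modv m \<delta> 1 v (2*j-1)) \<le> 0"
      proof
        fix j assume j: "j \<in> {1..m}"
        have dd: "\<delta> j * \<delta> j = 1" using bspec[OF d j] by auto
        have "\<delta> j * ((1 - t) * modv m \<delta> 1 v (2*j-1))
           = (1 - t) * (\<delta> j * v (2*j-1) - (\<delta> j * \<delta> j) * max 0 (\<delta> j * v (2*j-1)))"
          unfolding modv_odd[OF j] by (simp add: algebra_simps)
        also have "\<dots> \<le> 0" using dd t by (intro mult_nonneg_nonpos) auto
        finally show "\<delta> j * ((1 - t) * modv m \<delta> 1 v (2*j-1)) \<le> 0" .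
      qed
      have "h2 z = ((\<lambda>_. 0), (\<lambda>k. (1 - t) * modv m \<delta> 1 v k))" by (simp add: h2_def zz)
      then show "h2 z \<in> YY l m \<delta> e"
        using desc_mem[OF d e ht2 ds] by (simp add: YY_def)
    qed
    show "h2 (0, x) = q x" for x by (simp add: h2_def q_def)
    show "h2 (1, x) = ((\<lambda>_. 0), (\<lambda>_. 0))" for x by (simp add: h2_def)
  qed
  have "homotopic_with_canon (\<lambda>x. True) (YY l m \<delta> e) (YY l m \<delta> e) id (\<lambda>x. ((\<lambda>_. 0), (\<lambda>_. 0)))"
    by (rule homotopic_with_trans[OF H1 H2])
  then show ?thesis unfolding contractible_def by blast
qed

theorem mainTheorem8:
  fixes l m :: nat and \<delta> :: "nat \<Rightarrow> real" and \<epsilon> :: real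
  assumes "\<forall>j\<in>{1..m}. \<delta> j = -1 \<or> \<delta> j = 1"
    and "\<epsilon> > 0"
  shows "\<exists>Z :: (((nat \<Rightarrow> real) \<times> (nat \<Rightarrow> real)) + (nat \<Rightarrow> real)) topology.
           cell_attached (top_of_set (Neps l m \<delta> (-\<epsilon>))) m Z
           \<and> top_of_set (Neps l m \<delta> \<epsilon>) homotopy_equivalent_space Z"
proof -
  note d = assms(1) and e = assms(2)
  define Y where "Y = YY l m \<delta> \<epsilon>"
  define Z where "Z = (pullback_topology (Inl ` Y) projl (top_of_set Y)
        :: (((nat \<Rightarrow> real) \<times> (nat \<Rightarrow> real)) + (nat \<Rightarrow> real)) topology)"
  have sph: "Phi m \<delta> \<epsilon> ` csphere m \<subseteq> Neps l m \<delta> (-\<epsilon>)"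
  proof
    fix p assume "p \<in> Phi m \<delta> \<epsilon> ` csphere m"
    then obtain x where x: "x \<in> csphere m" "p = Phi m \<delta> \<epsilon> x" by auto
    have "FF l m \<delta> p = - \<epsilon>" using x FF_Phi[OF d e] by (simp add: csphere_def)
    then show "p \<in> Neps l m \<delta> (-\<epsilon>)" using x Phi_HT by (simp add: Neps_eq)
  qed
  have disj: "Neps l m \<delta> (-\<epsilon>) \<inter> Phi m \<delta> \<epsilon> ` (cdisc m - csphere m) = {}"
  proof (rule ccontr)
    assume "Neps l m \<delta> (-\<epsilon>) \<inter> Phi m \<delta> \<epsilon> ` (cdisc m - csphere m) \<noteq> {}"
    then obtain x where x: "x \<in> cdisc m" "x \<notin> csphere m" "Phi m \<delta> \<epsilon> x \<in> Neps l m \<delta> (-\<epsilon>)" by auto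
    have s1: "(\<Sum>j=1..m. (x j)^2) < 1" using x(1,2) by (auto simp: cdisc_def csphere_def)
    have "FF l m \<delta> (Phi m \<delta> \<epsilon> x) \<le> - \<epsilon>" using x(3) by (simp add: Neps_eq)
    then have "- \<epsilon> * (\<Sum>j=1..m. (x j)^2) \<le> - \<epsilon> * 1" using FF_Phi[OF d e] by simp
    then have "(\<Sum>j=1..m. (x j)^2) \<ge> 1" using e by simp
    then show False using s1 by simp
  qed
  have inj: "inj_on (Phi m \<delta> \<epsilon>) (cdisc m - csphere m)"
    using Phi_inj[OF d e] by (rule inj_on_subset) blast
  have cell: "cell_attached (top_of_set (Neps l m \<delta> (-\<epsilon>))) m Z"
    unfolding Z_def
    by (rule cell_model[OF compact_cdisc cont_Phi closed_Neps _ sph inj disj csphere_sub])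
       (simp add: Y_def YY_def)
  have cZ: "contractible_space Z"
    using homeomorphic_space_contractibility[OF Z_homeo[of Y]] contractible_YY[OF d e]
    by (simp add: Z_def Y_def)
  have cN: "contractible_space (top_of_set (Neps l m \<delta> \<epsilon>))"
    using contractible_Neps_pos[OF e] by simp
  have a: "((\<lambda>_. 0), (\<lambda>_. 0)) \<in> topspace (top_of_set (Neps l m \<delta> \<epsilon>))"
    using e by (simp add: Neps_eq HT_iff FF_def)
  have b: "Inl (Phi m \<delta> \<epsilon> (\<lambda>_. 0)) \<in> topspace Z"
    using zero_cdisc by (simp add: Z_def topspace_Z Y_def YY_def)
  show ?thesis using cell heq_contractible[OF cN cZ a b] by blast
qed

end
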